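(* Assume the general coarsening setting described in the context. Let $\mathbf{1}$ denote the path identically equal to $1$, i.e. $\{R=\mathbf{1}\}=\{R_t=1 \text{ for all } t\ge 0\}$. Then the mechanism leading to incomplete data is ignorable on $\mathbf{1}$: for all $\theta\in\Theta$ and every $\psi_0\in\Psi$, $$\mathcal{L}^{(\theta,\psi_0)/(\theta_0,\psi_0)}_{\mathcal{O}}=\mathcal{L}^{\theta/\theta_0}_{\mathcal{X}}\quad\text{a.s. on } \{R_t=1,\ t\ge 0\}.$$
   Context: Setting (general coarsening model for processes). On a measurable space $(\Omega,\mathcal{F})$ live two càdlàg stochastic processes: $X=(X_t)_{t\ge0}$ with values in $\mathbb{R}^d$ (path space a Skorohod space with its Borel $\sigma$-field) and a response indicator process $R=(R_t)_{t\ge0}$ with values in $\{0,1\}$ (componentwise if multivariate), $R_t=1$ meaning that $X_t$ is observed. Let $\mathcal{X}=\sigma(X_t,t\ge0)$, $\mathcal{R}=\sigma(R_t,t\ge0)$ and $\mathcal{F}=\mathcal{X}\vee\mathcal{R}$. A model is a family $\{P_{(\theta,\psi)}:(\theta,\psi)\in\Theta\times\Psi\}$ of mutually equivalent probability measures on $\mathcal{F}$ (parameter spaces possibly infinite-dimensional), with reference measure $P_{(\theta_0,\psi_0)}$; the restriction of $P_{(\theta,\psi)}$ to $\mathcal{X}$ depends only on $\theta$ and is denoted $P_\theta$. Non-informativeness is assumed: $P_{(\theta_1,\psi)}(A\mid\mathcal{X})=P_{(\theta_2,\psi)}(A\mid\mathcal{X})$ a.s. for all $A\in\mathcal{R}$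 and all $\theta_1,\theta_2,\psi$. For a sub-$\sigma$-field $\mathcal{G}$, $\mathcal{L}^{(\theta,\psi)/(\theta_0,\psi_0)}_{\mathcal{G}}$ denotes the Radon–Nikodym derivative of $P_{(\theta,\psi)}$ with respect to $P_{(\theta_0,\psi_0)}$ restricted to $\mathcal{G}$; for $\mathcal{G}\subset\mathcal{X}$ it depends only on $\theta,\theta_0$ and is written $\mathcal{L}^{\theta/\theta_0}_{\mathcal{G}}$. The observed $\sigma$-field is $\mathcal{O}=\sigma(R_tX_t,R_t,\ t\ge0)$. For a deterministic path $r=(r_t)$, $\{R=r\}=\{R_t=r_t\ \forall t\ge0\}$ and $\mathcal{X}^r=\sigma(r_tX_t,\ t\ge0)$. The mechanism is called ignorable on $r$ if $\mathcal{L}^{(\theta,\psi_0)/(\theta_0,\psi_0)}_{\mathcal{O}}=\mathcal{L}^{\theta/\theta_0}_{\mathcal{X}^r}$ a.s. on $\{R=r\}$ for all $\theta$, whatever $\psi_0$. *)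

theory Defs
  imports "HOL-Probability.Probability"
begin

definition cadlag :: "(real \<Rightarrow> 'b::topological_space) \<Rightarrow> bool" where
  "cadlag f \<longleftrightarrow> (\<forall>t\<ge>0. continuous (at_right t) f) \<and>
                 (\<forall>t>0. \<exists>l. (f \<longlongrightarrow> l) (at_left t))"

definition proc_sigma :: "'a set \<Rightarrow> (real \<Rightarrow> 'a \<Rightarrow> 'b::topological_space) \<Rightarrow> 'a measure" where
  "proc_sigma \<Omega> Y = sigma \<Omega> (\<Union>t\<in>{0..}. {Y t -` B \<inter> \<Omega> | B. B \<in> sets borel})"

text \<open>Componentwise product r_t x_t (observed value, 0 where unobserved).\<close>
definition cmult :: "real^'d \<Rightarrow> real^'d \<Rightarrow> real^'d" where
  "cmult r x = (\<chi> i. r $ i * x $ i)"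

definition one_vec :: "real^'d" where
  "one_vec = (\<chi> i. 1)"

definition LR :: "'a measure \<Rightarrow> 'a measure \<Rightarrow> 'a measure \<Rightarrow> 'a \<Rightarrow> ennreal" where
  "LR G Q P = RN_deriv (restr_to_subalg P G) (restr_to_subalg Q G)"

end

theory Submission
  imports Defs
begin

lemma cmult_cont: "continuous_on UNIV (\<lambda>x::((real^'d) \<times> (real^'d)). cmult (fst x) (snd x))"
  unfolding cmult_def
  apply (rule continuous_on_vec_lambda)
  apply (rule continuous_on_mult)
   apply (rule continuous_on_component, rule continuous_on_fst, rule continuous_on_id)
  apply (rule continuous_on_component, rule continuous_on_snd, rule continuous_on_id)
  done

lemma proc_sigma_space: "space (proc_sigma \<Omega> Z) = \<Omega>"
  unfolding proc_sigma_def by (rule space_measure_of_conv)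

lemma proc_sigma_sets: "sets (proc_sigma \<Omega> Z) = sigma_sets \<Omega> (\<Union>t\<in>{0..}. {Z t -` B \<inter> \<Omega> | B. B \<in> sets borel})"
  unfolding proc_sigma_def by (rule sets_measure_of) blast

lemma proc_sigma_sub:
  assumes "\<And>t. t \<ge> 0 \<Longrightarrow> Z t \<in> borel_measurable M"
  shows "sets (proc_sigma (space M) Z) \<subseteq> sets M"
  unfolding proc_sigma_sets
proof (rule sets.sigma_sets_subset, rule subsetI)
  fix x assume "x \<in> (\<Union>t\<in>{0..}. {Z t -` B \<inter> space M | B. B \<in> sets borel})"
  then obtain t B where tB: "t \<ge> 0" "B \<in> sets borel" "x = Z t -` B \<inter> space M" by blast
  have "Z t -` B \<inter> space M \<in> sets M" by (rule measurable_sets[OF assms[OF tB(1)] tB(2)])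
  then show "x \<in> sets M" by (simp only: tB(3))
qed

lemma proc_sigma_subalg:
  assumes "\<And>t. t \<ge> 0 \<Longrightarrow> Z t \<in> borel_measurable M" "sets N = sets M"
  shows "subalgebra N (proc_sigma (space M) Z)"
proof -
  have "space N = space M" by (rule sets_eq_imp_space_eq[OF assms(2)])
  then show ?thesis unfolding subalgebra_def using proc_sigma_sub[OF assms(1)] assms(2)
    by (simp add: proc_sigma_space)
qed

lemma proc_sigma_gen:
  assumes "t \<ge> 0" "B \<in> sets borel"
  shows "Z t -` B \<inter> \<Omega> \<in> sets (proc_sigma \<Omega> Z)"
  unfolding proc_sigma_sets using assms by (intro sigma_sets.Basic) blast

lemma proc_sigma_meas:
  assumes "t \<ge> 0"
  shows "Z t \<in> borel_measurable (proc_sigma \<Omega> Z)"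
  unfolding measurable_def by (auto simp: proc_sigma_space intro: proc_sigma_gen[OF assms])

lemma cadlag_rat:
  assumes "cadlag f" "\<And>q. q \<in> \<rat> \<Longrightarrow> q \<ge> 0 \<Longrightarrow> f q = c" "t \<ge> 0"
  shows "f t = (c::'b::t2_space)"
proof (rule ccontr)
  assume ne: "f t \<noteq> c"
  have "(f \<longlongrightarrow> f t) (at_right t)" using assms(1,3) unfolding cadlag_def
    by (simp add: continuous_within)
  moreover have "open (- {c})" "f t \<in> - {c}" using ne by auto
  ultimately have "eventually (\<lambda>s. f s \<in> - {c}) (at_right t)"
    using topological_tendstoD by blast
  then obtain b where b: "b > t" "\<And>s. s > t \<Longrightarrow> s < b \<Longrightarrow> f s \<in> - {c}"
    unfolding eventually_at_right_field by blast
  obtain q where q: "q \<in> \<rat>" "t < q" "q < b" using Rats_dense_in_real[OF b(1)] by blast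
  then have "f q = c" using assms(2,3) by auto
  with b(2)[OF q(2,3)] show False by auto
qed

lemma cmult_one: "cmult one_vec x = x"
  unfolding cmult_def one_vec_def by (simp add: vec_eq_iff)

lemma key:
  fixes P0 P1 G :: "'a measure" and A B :: "'a set"
  assumes p0: "prob_space P0" and p1: "prob_space P1" and se: "sets P1 = sets P0"
    and ac: "absolutely_continuous P0 P1" and sub: "subalgebra P0 G"
    and A: "A \<in> sets P0" and B: "B \<in> sets G"
    and ni: "AE x in P1. real_cond_exp P1 G (indicator A) x = real_cond_exp P0 G (indicator A) x"
  shows "emeasure P1 (A \<inter> B) = (\<integral>\<^sup>+x. RN_deriv (restr_to_subalg P0 G) (restr_to_subalg P1 G) x * indicator (A \<inter> B) x \<partial>P0)"
proof -
  interpret p0: prob_space P0 by fact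
  interpret p1: prob_space P1 by fact
  have sp: "space P1 = space P0" using sets_eq_imp_space_eq[OF se] .
  have sub1: "subalgebra P1 G" using sub se sp unfolding subalgebra_def by auto
  interpret s0: finite_measure_subalgebra P0 G
    by (simp add: finite_measure_subalgebra_def finite_measure_subalgebra_axioms_def sub p0.finite_measure_axioms)
  interpret s1: finite_measure_subalgebra P1 G
    by (simp add: finite_measure_subalgebra_def finite_measure_subalgebra_axioms_def sub1 p1.finite_measure_axioms)
  define M0 where "M0 = restr_to_subalg P0 G"
  define M1 where "M1 = restr_to_subalg P1 G"
  define L where "L = RN_deriv M0 M1"
  have sM0: "sets M0 = sets G" using sets_restr_to_subalg[OF sub] M0_def by simp
  have sM1: "sets M1 = sets G" using sets_restr_to_subalg[OF sub1] M1_def by simp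
  have fM0: "finite_measure M0" using finite_measure_restr_to_subalg[OF sub p0.finite_measure_axioms] M0_def by simp
  have fM1: "finite_measure M1" using finite_measure_restr_to_subalg[OF sub1 p1.finite_measure_axioms] M1_def by simp
  interpret M0: finite_measure M0 by fact
  interpret M1: finite_measure M1 by fact
  have acM: "absolutely_continuous M0 M1"
    using ac unfolding absolutely_continuous_def M0_def M1_def null_sets_restr_to_subalg[OF sub] null_sets_restr_to_subalg[OF sub1]
    by auto
  have sM10: "sets M1 = sets M0" using sM0 sM1 by simp
  have mG: "measurable M0 borel = measurable G borel" by (rule measurable_cong_sets[OF sM0 refl])
  have Lmeas[measurable]: "L \<in> borel_measurable G" using borel_measurable_RN_deriv[of M0 M1] unfolding L_def mG .
  have Lfin: "AE x in M0. L x \<noteq> \<infinity>"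
    using M0.RN_deriv_finite[OF M1.sigma_finite_measure_axioms acM sM10] unfolding L_def .
  have LfinP0: "AE x in P0. L x \<noteq> \<infinity>" using AE_restr_to_subalg[OF sub] Lfin unfolding M0_def by blast
  define Lr where "Lr = (\<lambda>x. enn2real (L x))"
  have Lrmeas[measurable]: "Lr \<in> borel_measurable G" unfolding Lr_def by measurable
  have "integrable M1 (\<lambda>x. 1::real)" by simp
  then have "integrable M0 (\<lambda>x. Lr x * 1)"
    using M0.RN_deriv_integrable[OF M1.sigma_finite_measure_axioms acM sM10, of "\<lambda>x. 1"]
    unfolding Lr_def L_def by simp
  then have "integrable M0 Lr" by simp
  then have int0: "integrable P0 Lr" using integrable_from_subalg[OF sub] unfolding M0_def by blast
  have BP0: "B \<in> sets P0" using B sub unfolding subalgebra_def by auto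
  have BP1: "B \<in> sets P1" using BP0 se by simp
  have AP1: "A \<in> sets P1" using A se by simp
  define c0 where "c0 = real_cond_exp P0 G (indicator A)"
  define c1 where "c1 = real_cond_exp P1 G (indicator A)"
  have c0G[measurable]: "c0 \<in> borel_measurable G" unfolding c0_def by (rule borel_measurable_cond_exp)
  have c1G[measurable]: "c1 \<in> borel_measurable G" unfolding c1_def by (rule borel_measurable_cond_exp)
  have indBG[measurable]: "(indicator B :: 'a \<Rightarrow> real) \<in> borel_measurable G" by (rule borel_measurable_indicator[OF B])
  have fG[measurable]: "(\<lambda>x. indicator B x * c0 x :: real) \<in> borel_measurable G" by measurable
  have indA1: "(indicator A :: 'a \<Rightarrow> real) \<in> borel_measurable P1" by (rule borel_measurable_indicator[OF AP1])
  have indA0: "(indicator A :: 'a \<Rightarrow> real) \<in> borel_measurable P0" by (rule borel_measurable_indicator[OF A])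
  have intAB: "integrable P1 (\<lambda>x. indicator B x * indicator A x :: real)"
  proof -
    have "integrable P1 (indicator (A \<inter> B) :: 'a \<Rightarrow> real)"
      by (intro integrable_real_indicator sets.Int AP1 BP1) (simp add: less_top[symmetric])
    moreover have "(\<lambda>x. indicator B x * indicator A x :: real) = indicator (A \<inter> B)"
      by (rule ext) (simp split: split_indicator)
    ultimately show ?thesis by simp
  qed
  have "measure P1 (A \<inter> B) = (\<integral>x. indicator (A \<inter> B) x \<partial>P1)"
    using AP1 BP1 by (simp add: Int_absorb2 sets.sets_into_space)
  also have "\<dots> = (\<integral>x. indicator B x * indicator A x \<partial>P1)"
    by (simp add: indicator_inter_arith mult.commute)
  also have "\<dots> = (\<integral>x. indicator B x * c1 x \<partial>P1)"
    unfolding c1_def by (rule s1.real_cond_exp_intg(2)[symmetric, OF intAB indBG indA1])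
  also have "\<dots> = (\<integral>x. indicator B x * c0 x \<partial>P1)"
  proof (rule integral_cong_AE)
    show "(\<lambda>x. indicator B x * c1 x) \<in> borel_measurable P1"
    proof -
      have "(\<lambda>x. indicator B x * c1 x :: real) \<in> borel_measurable G" by measurable
      then show ?thesis by (rule measurable_from_subalg[OF sub1])
    qed
    show "(\<lambda>x. indicator B x * c0 x) \<in> borel_measurable P1"
      using measurable_from_subalg[OF sub1 fG] .
    show "AE x in P1. indicator B x * c1 x = indicator B x * c0 x"
      using ni unfolding c0_def c1_def by eventually_elim simp
  qed
  also have "\<dots> = (\<integral>x. indicator B x * c0 x \<partial>M1)"
    unfolding M1_def by (rule integral_subalgebra2[OF sub1 fG, symmetric])
  also have "\<dots> = (\<integral>x. Lr x * (indicator B x * c0 x) \<partial>M0)"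
    unfolding Lr_def L_def
    by (rule M0.RN_deriv_integral[OF M1.sigma_finite_measure_axioms acM sM10])
       (unfold mG, rule fG)
  also have "\<dots> = (\<integral>x. Lr x * (indicator B x * c0 x) \<partial>P0)"
    unfolding M0_def by (rule integral_subalgebra2[OF sub]) measurable
  also have "\<dots> = (\<integral>x. (Lr x * indicator B x) * c0 x \<partial>P0)"
    by (simp add: mult.assoc)
  also have "\<dots> = (\<integral>x. (Lr x * indicator B x) * indicator A x \<partial>P0)"
  proof -
    have "integrable P0 (\<lambda>x. Lr x * indicator (A \<inter> B) x)"
      by (rule integrable_real_mult_indicator[OF _ int0]) (use A BP0 in auto)
    then have i: "integrable P0 (\<lambda>x. (Lr x * indicator B x) * indicator A x)"
      by (simp add: indicator_inter_arith mult_ac)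
    have m: "(\<lambda>x. Lr x * indicator B x :: real) \<in> borel_measurable G" by measurable
    show ?thesis unfolding c0_def by (rule s0.real_cond_exp_intg(2)[OF i m indA0])
  qed
  also have "\<dots> = (\<integral>x. Lr x * indicator (A \<inter> B) x \<partial>P0)"
    by (simp add: indicator_inter_arith mult_ac)
  finally have eqr: "measure P1 (A \<inter> B) = (\<integral>x. Lr x * indicator (A \<inter> B) x \<partial>P0)" .
  have intr: "integrable P0 (\<lambda>x. Lr x * indicator (A \<inter> B) x)"
    by (rule integrable_real_mult_indicator[OF _ int0]) (use A BP0 in auto)
  have "(\<integral>\<^sup>+x. L x * indicator (A \<inter> B) x \<partial>P0) = (\<integral>\<^sup>+x. ennreal (Lr x * indicator (A \<inter> B) x) \<partial>P0)"
  proof (rule nn_integral_cong_AE)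
    show "AE x in P0. L x * indicator (A \<inter> B) x = ennreal (Lr x * indicator (A \<inter> B) x)"
      using LfinP0
    proof eventually_elim
      case (elim x)
      then have "ennreal (Lr x) = L x" unfolding Lr_def by (simp add: less_top)
      then show ?case by (simp split: split_indicator)
    qed
  qed
  also have "\<dots> = ennreal (\<integral>x. Lr x * indicator (A \<inter> B) x \<partial>P0)"
    by (rule nn_integral_eq_integral[OF intr]) (simp add: Lr_def)
  also have "\<dots> = emeasure P1 (A \<inter> B)"
    using eqr p1.emeasure_eq_measure by simp
  finally show ?thesis unfolding L_def M0_def M1_def by simp
qed

theorem mainTheorem1:
  fixes M :: "'a measure"
    and X :: "real \<Rightarrow> 'a \<Rightarrow> real^'d"
    and R :: "real \<Rightarrow> 'a \<Rightarrow> real^'d"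
    and P :: "'th \<Rightarrow> 'ps \<Rightarrow> 'a measure"
    and \<Theta> :: "'th set" and \<Psi> :: "'ps set"
    and \<theta>0 :: 'th
  assumes X_meas: "\<And>t. t \<ge> 0 \<Longrightarrow> X t \<in> borel_measurable M"
    and R_meas: "\<And>t. t \<ge> 0 \<Longrightarrow> R t \<in> borel_measurable M"
    and X_cadlag: "\<And>\<omega>. \<omega> \<in> space M \<Longrightarrow> cadlag (\<lambda>t. X t \<omega>)"
    and R_cadlag: "\<And>\<omega>. \<omega> \<in> space M \<Longrightarrow> cadlag (\<lambda>t. R t \<omega>)"
    and R_01: "\<And>t \<omega> i. t \<ge> 0 \<Longrightarrow> \<omega> \<in> space M \<Longrightarrow> R t \<omega> $ i \<in> {0, 1}"
    and F_gen: "sets M = sets (proc_sigma (space M) (\<lambda>t \<omega>. (X t \<omega>, R t \<omega>)))"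
    and \<theta>0_in: "\<theta>0 \<in> \<Theta>"
    and P_prob: "\<And>\<theta> \<psi>. \<theta> \<in> \<Theta> \<Longrightarrow> \<psi> \<in> \<Psi> \<Longrightarrow> prob_space (P \<theta> \<psi>)"
    and P_sets: "\<And>\<theta> \<psi>. \<theta> \<in> \<Theta> \<Longrightarrow> \<psi> \<in> \<Psi> \<Longrightarrow> sets (P \<theta> \<psi>) = sets M"
    and P_equiv: "\<And>\<theta>1 \<psi>1 \<theta>2 \<psi>2. \<theta>1 \<in> \<Theta> \<Longrightarrow> \<psi>1 \<in> \<Psi> \<Longrightarrow> \<theta>2 \<in> \<Theta> \<Longrightarrow> \<psi>2 \<in> \<Psi> \<Longrightarrow>
                  absolutely_continuous (P \<theta>1 \<psi>1) (P \<theta>2 \<psi>2)"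
    and P_X_theta: "\<And>\<theta> \<psi>1 \<psi>2 A. \<theta> \<in> \<Theta> \<Longrightarrow> \<psi>1 \<in> \<Psi> \<Longrightarrow> \<psi>2 \<in> \<Psi> \<Longrightarrow>
                  A \<in> sets (proc_sigma (space M) X) \<Longrightarrow>
                  emeasure (P \<theta> \<psi>1) A = emeasure (P \<theta> \<psi>2) A"
    and non_inf: "\<And>\<theta>1 \<theta>2 \<psi> A. \<theta>1 \<in> \<Theta> \<Longrightarrow> \<theta>2 \<in> \<Theta> \<Longrightarrow> \<psi> \<in> \<Psi> \<Longrightarrow>
                  A \<in> sets (proc_sigma (space M) R) \<Longrightarrow>
                  AE \<omega> in P \<theta>1 \<psi>.
                    real_cond_exp (P \<theta>1 \<psi>) (proc_sigma (space M) X) (indicator A) \<omega> =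
                    real_cond_exp (P \<theta>2 \<psi>) (proc_sigma (space M) X) (indicator A) \<omega>"
  shows "\<forall>\<theta>\<in>\<Theta>. \<forall>\<psi>0\<in>\<Psi>. AE \<omega> in P \<theta>0 \<psi>0.
           (\<forall>t\<ge>0. R t \<omega> = one_vec) \<longrightarrow>
           LR (proc_sigma (space M) (\<lambda>t \<omega>. (cmult (R t \<omega>) (X t \<omega>), R t \<omega>)))
              (P \<theta> \<psi>0) (P \<theta>0 \<psi>0) \<omega>
           = LR (proc_sigma (space M) X) (P \<theta> \<psi>0) (P \<theta>0 \<psi>0) \<omega>"
proof (intro ballI)
  fix \<theta> \<psi>0 assume th: "\<theta> \<in> \<Theta>" and ps: "\<psi>0 \<in> \<Psi>"
  define \<Omega> where "\<Omega> = space M"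
  define Y where "Y = (\<lambda>t \<omega>. (cmult (R t \<omega>) (X t \<omega>), R t \<omega>))"
  define GX where "GX = proc_sigma \<Omega> X"
  define GR where "GR = proc_sigma \<Omega> R"
  define GO where "GO = proc_sigma \<Omega> Y"
  define P0 where "P0 = P \<theta>0 \<psi>0"
  define P1 where "P1 = P \<theta> \<psi>0"
  define S where "S = {\<omega>\<in>\<Omega>. \<forall>t\<ge>0. R t \<omega> = one_vec}"
  have sP0: "sets P0 = sets M" using P_sets[OF \<theta>0_in ps] unfolding P0_def .
  have sP1: "sets P1 = sets M" using P_sets[OF th ps] unfolding P1_def .
  have p0: "prob_space P0" using P_prob[OF \<theta>0_in ps] unfolding P0_def .
  have p1: "prob_space P1" using P_prob[OF th ps] unfolding P1_def .
  have ac: "absolutely_continuous P0 P1" using P_equiv[OF \<theta>0_in ps th ps] unfolding P0_def P1_def .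
  have spP0: "space P0 = space M" by (rule sets_eq_imp_space_eq[OF sP0])
  have Ymeas: "Y t \<in> borel_measurable M" if t: "t \<ge> 0" for t
  proof -
    have "(\<lambda>\<omega>. cmult (R t \<omega>) (X t \<omega>)) \<in> borel_measurable M"
      by (rule borel_measurable_continuous_Pair[OF R_meas[OF t] X_meas[OF t] cmult_cont])
    then show "Y t \<in> borel_measurable M" unfolding Y_def by (rule borel_measurable_Pair[OF _ R_meas[OF t]])
  qed
  have subX: "subalgebra P0 GX" unfolding GX_def \<Omega>_def by (rule proc_sigma_subalg[OF X_meas sP0])
  have subX1: "subalgebra P1 GX" unfolding GX_def \<Omega>_def by (rule proc_sigma_subalg[OF X_meas sP1])
  have subO: "subalgebra P0 GO" unfolding GO_def \<Omega>_def by (rule proc_sigma_subalg[OF Ymeas sP0])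
  have subO1: "subalgebra P1 GO" unfolding GO_def \<Omega>_def by (rule proc_sigma_subalg[OF Ymeas sP1])
  have subR: "subalgebra P0 GR" unfolding GR_def \<Omega>_def by (rule proc_sigma_subalg[OF R_meas sP0])
  have spX: "space GX = \<Omega>" unfolding GX_def by (rule proc_sigma_space)
  have spO: "space GO = \<Omega>" unfolding GO_def by (rule proc_sigma_space)

  define Q where "Q = {q::real. q \<in> \<rat> \<and> 0 \<le> q}"
  have Qc: "countable Q" unfolding Q_def by (rule countable_subset[OF _ countable_rat]) blast
  have Q0: "0 \<in> Q" unfolding Q_def by simp
  then have Qne: "Q \<noteq> {}" by blast
  have Seq: "S = (\<Inter>q\<in>Q. {\<omega>\<in>\<Omega>. R q \<omega> = one_vec})"
  proof (rule set_eqI, rule iffI)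
    fix \<omega> assume "\<omega> \<in> S" then show "\<omega> \<in> (\<Inter>q\<in>Q. {\<omega>\<in>\<Omega>. R q \<omega> = one_vec})"
      unfolding S_def Q_def by blast
  next
    fix \<omega> assume a: "\<omega> \<in> (\<Inter>q\<in>Q. {\<omega>\<in>\<Omega>. R q \<omega> = one_vec})"
    have om: "\<omega> \<in> \<Omega>" using a Q0 by blast
    have "R t \<omega> = one_vec" if t: "t \<ge> 0" for t
    proof -
      have cad: "cadlag (\<lambda>t. R t \<omega>)" using R_cadlag om unfolding \<Omega>_def by blast
      have "\<And>q. q \<in> \<rat> \<Longrightarrow> 0 \<le> q \<Longrightarrow> R q \<omega> = one_vec" using a unfolding Q_def by blast
      then show ?thesis using cadlag_rat[of "\<lambda>t. R t \<omega>" one_vec t, OF cad _ t] by blast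
    qed
    then show "\<omega> \<in> S" unfolding S_def using om by blast
  qed
  have Rq_R: "{\<omega>\<in>\<Omega>. R q \<omega> = one_vec} \<in> sets GR" if q: "q \<in> Q" for q
  proof -
    have q0: "q \<ge> 0" using q unfolding Q_def by blast
    have "{\<omega>\<in>\<Omega>. R q \<omega> = one_vec} = R q -` {one_vec} \<inter> \<Omega>" by blast
    also have "\<dots> \<in> sets GR" unfolding GR_def
      by (rule proc_sigma_gen[OF q0 borel_closed[OF closed_singleton]])
    finally show ?thesis .
  qed
  have Rq_O: "{\<omega>\<in>\<Omega>. R q \<omega> = one_vec} \<in> sets GO" if q: "q \<in> Q" for q
  proof -
    have q0: "q \<ge> 0" using q unfolding Q_def by blast
    have "{\<omega>\<in>\<Omega>. R q \<omega> = one_vec} = Y q -` (UNIV \<times> {one_vec}) \<inter> \<Omega>" unfolding Y_def by blast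
    also have "\<dots> \<in> sets GO" unfolding GO_def
      by (rule proc_sigma_gen[OF q0 borel_closed[OF closed_Times[OF closed_UNIV closed_singleton]]])
    finally show ?thesis .
  qed
  have SR: "S \<in> sets GR" unfolding Seq
    by (rule sets.countable_INT'[OF Qc Qne]) (use Rq_R in blast)
  have SO: "S \<in> sets GO" unfolding Seq
    by (rule sets.countable_INT'[OF Qc Qne]) (use Rq_O in blast)
  have SsubO: "S \<subseteq> \<Omega>" unfolding S_def by blast
  have SP0: "S \<in> sets P0" using SR subR unfolding subalgebra_def by blast

  have fstm: "fst \<in> borel_measurable (borel :: ((real^'d) \<times> (real^'d)) measure)"
    by (rule borel_measurable_continuous_onI) (intro continuous_intros)

  have tr1: "B \<inter> S \<in> sets GO" if B: "B \<in> sets GX" for B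
  proof -
    have "B \<in> sigma_sets \<Omega> (\<Union>t\<in>{0..}. {X t -` C \<inter> \<Omega> | C. C \<in> sets borel})"
      using B unfolding GX_def proc_sigma_sets .
    then show "B \<inter> S \<in> sets GO"
    proof (induction rule: sigma_sets.induct)
      case (Basic a)
      then obtain t C where tC: "t \<ge> 0" "C \<in> sets borel" "a = X t -` C \<inter> \<Omega>" by blast
      have fC: "fst -` C \<in> sets (borel :: ((real^'d) \<times> (real^'d)) measure)"
        by (rule measurable_sets_borel[OF fstm tC(2)])
      have eq: "a \<inter> S = (Y t -` (fst -` C) \<inter> \<Omega>) \<inter> S"
      proof (rule set_eqI)
        fix \<omega> show "\<omega> \<in> a \<inter> S \<longleftrightarrow> \<omega> \<in> (Y t -` (fst -` C) \<inter> \<Omega>) \<inter> S"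
        proof (cases "\<omega> \<in> S")
          case True
          then have "R t \<omega> = one_vec" using tC(1) unfolding S_def by blast
          then show ?thesis by (simp add: tC(3) Y_def cmult_one)
        next
          case False then show ?thesis by simp
        qed
      qed
      have "Y t -` (fst -` C) \<inter> \<Omega> \<in> sets GO" unfolding GO_def by (rule proc_sigma_gen[OF tC(1) fC])
      then show ?case unfolding eq using sets.Int[OF _ SO] by blast
    next
      case Empty show ?case by simp
    next
      case (Compl a)
      have "(\<Omega> - a) \<inter> S = S - (a \<inter> S)" using SsubO by blast
      then show ?case using sets.Diff[OF SO Compl.IH] by simp
    next
      case (Union a)
      have "(\<Union>i. a i) \<inter> S = (\<Union>i. a i \<inter> S)" by blast
      moreover have "(\<Union>i. a i \<inter> S) \<in> sets GO"
        by (rule sets.countable_UN) (use Union.IH in blast)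
      ultimately show ?case by simp
    qed
  qed

  have tr2: "\<exists>B\<in>sets GX. A \<inter> S = B \<inter> S" if A: "A \<in> sets GO" for A
  proof -
    have "A \<in> sigma_sets \<Omega> (\<Union>t\<in>{0..}. {Y t -` C \<inter> \<Omega> | C. C \<in> sets borel})"
      using A unfolding GO_def proc_sigma_sets .
    then show ?thesis
    proof (induction rule: sigma_sets.induct)
      case (Basic a)
      then obtain t C where tC: "t \<ge> 0" "C \<in> sets borel" "a = Y t -` C \<inter> \<Omega>" by blast
      have m: "(\<lambda>\<omega>. (X t \<omega>, one_vec)) \<in> borel_measurable GX"
        unfolding GX_def by (rule borel_measurable_Pair[OF proc_sigma_meas[OF tC(1)] borel_measurable_const])
      have Bm: "(\<lambda>\<omega>. (X t \<omega>, one_vec)) -` C \<inter> \<Omega> \<in> sets GX"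
        using measurable_sets[OF m tC(2)] unfolding spX .
      have eq: "a \<inter> S = ((\<lambda>\<omega>. (X t \<omega>, one_vec)) -` C \<inter> \<Omega>) \<inter> S"
      proof (rule set_eqI)
        fix \<omega> show "\<omega> \<in> a \<inter> S \<longleftrightarrow> \<omega> \<in> ((\<lambda>\<omega>. (X t \<omega>, one_vec)) -` C \<inter> \<Omega>) \<inter> S"
        proof (cases "\<omega> \<in> S")
          case True
          then have "R t \<omega> = one_vec" using tC(1) unfolding S_def by blast
          then show ?thesis by (simp add: tC(3) Y_def cmult_one)
        next
          case False then show ?thesis by simp
        qed
      qed
      show ?case using Bm eq by blast
    next
      case Empty show ?case by blast
    next
      case (Compl a)
      then obtain B where B: "B \<in> sets GX" "a \<inter> S = B \<inter> S" by blast
      have "\<Omega> - B \<in> sets GX" using sets.compl_sets[OF B(1)] unfolding spX .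
      moreover have "(\<Omega> - a) \<inter> S = (\<Omega> - B) \<inter> S" using B(2) SsubO by blast
      ultimately show ?case by blast
    next
      case (Union a)
      have "\<forall>i. \<exists>B. B \<in> sets GX \<and> a i \<inter> S = B \<inter> S" using Union.IH by blast
      then obtain Bf where Bf: "\<forall>i. Bf i \<in> sets GX \<and> a i \<inter> S = Bf i \<inter> S" using choice[of "\<lambda>i B. B \<in> sets GX \<and> a i \<inter> S = B \<inter> S"] by blast
      have "(\<Union>i. Bf i) \<in> sets GX" by (rule sets.countable_UN) (use Bf in blast)
      moreover have "(\<Union>i. a i) \<inter> S = (\<Union>i. Bf i) \<inter> S" using Bf by blast
      ultimately show ?case by blast
    qed
  qed

  define LX where "LX = LR GX P1 P0"
  define LO where "LO = LR GO P1 P0"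
  define \<mu>0 where "\<mu>0 = restr_to_subalg P0 GO"
  define \<mu>1 where "\<mu>1 = restr_to_subalg P1 GO"
  have s\<mu>0: "sets \<mu>0 = sets GO" unfolding \<mu>0_def by (rule sets_restr_to_subalg[OF subO])
  have s\<mu>1: "sets \<mu>1 = sets GO" unfolding \<mu>1_def by (rule sets_restr_to_subalg[OF subO1])
  have mO: "measurable \<mu>0 borel = measurable GO borel" by (rule measurable_cong_sets[OF s\<mu>0 refl])
  have mX: "measurable (restr_to_subalg P0 GX) borel = measurable GX borel"
    by (rule measurable_cong_sets[OF sets_restr_to_subalg[OF subX] refl])
  have LXm[measurable]: "LX \<in> borel_measurable GX"
    using borel_measurable_RN_deriv[of "restr_to_subalg P0 GX" "restr_to_subalg P1 GX"] unfolding LX_def LR_def mX .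
  have LOm[measurable]: "LO \<in> borel_measurable GO"
    using borel_measurable_RN_deriv[of \<mu>0 \<mu>1] unfolding LO_def LR_def \<mu>0_def[symmetric] \<mu>1_def[symmetric] mO .
  have SO'[measurable]: "S \<in> sets GO" by (rule SO)
  define g where "g = (\<lambda>\<omega>. LX \<omega> * indicator S \<omega>)"
  define f where "f = (\<lambda>\<omega>. LO \<omega> * indicator S \<omega>)"
  have fm[measurable]: "f \<in> borel_measurable GO" unfolding f_def by measurable
  have gm[measurable]: "g \<in> borel_measurable GO"
  proof (rule measurableI)
    fix x show "g x \<in> space borel" by simp
  next
    fix C :: "ennreal set" assume C: "C \<in> sets borel"
    have "LX -` C \<inter> \<Omega> \<in> sets GX" using measurable_sets[OF LXm C] unfolding spX .
    then have a1: "(LX -` C \<inter> \<Omega>) \<inter> S \<in> sets GO" by (rule tr1)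
    have a2: "(if 0 \<in> C then \<Omega> - S else {}) \<in> sets GO"
      using sets.compl_sets[OF SO] unfolding spO by simp
    have "g -` C \<inter> space GO = (LX -` C \<inter> \<Omega>) \<inter> S \<union> (if 0 \<in> C then \<Omega> - S else {})"
    proof (rule set_eqI)
      fix x show "x \<in> g -` C \<inter> space GO \<longleftrightarrow> x \<in> (LX -` C \<inter> \<Omega>) \<inter> S \<union> (if 0 \<in> C then \<Omega> - S else {})"
        unfolding spO g_def by (cases "x \<in> S"; cases "0 \<in> C") (use SsubO in auto)
    qed
    then show "g -` C \<inter> space GO \<in> sets GO" using sets.Un[OF a1 a2] by simp
  qed
  have fm0: "f \<in> borel_measurable \<mu>0" unfolding mO by (rule fm)
  have LOm0: "LO \<in> borel_measurable \<mu>0" unfolding mO by (rule LOm)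
  have gm0: "g \<in> borel_measurable \<mu>0" unfolding mO by (rule gm)
  interpret p0: prob_space P0 by (rule p0)
  interpret p1: prob_space P1 by (rule p1)
  have fin0: "finite_measure \<mu>0" unfolding \<mu>0_def by (rule finite_measure_restr_to_subalg[OF subO p0.finite_measure_axioms])
  interpret m0: finite_measure \<mu>0 by (rule fin0)
  have acO: "absolutely_continuous \<mu>0 \<mu>1"
    using ac unfolding absolutely_continuous_def \<mu>0_def \<mu>1_def null_sets_restr_to_subalg[OF subO] null_sets_restr_to_subalg[OF subO1]
    by auto
  have s\<mu>10: "sets \<mu>1 = sets \<mu>0" using s\<mu>0 s\<mu>1 by simp
  have densO: "density \<mu>0 LO = \<mu>1"
    unfolding LO_def LR_def \<mu>0_def[symmetric] \<mu>1_def[symmetric] by (rule m0.density_RN_deriv[OF acO s\<mu>10])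
  have ni: "AE x in P1. real_cond_exp P1 GX (indicator S) x = real_cond_exp P0 GX (indicator S) x"
    using non_inf[OF th \<theta>0_in ps, of S] SR unfolding P0_def P1_def GX_def GR_def \<Omega>_def by blast
  have sP10: "sets P1 = sets P0" using sP0 sP1 by simp
  have dens_eq: "density \<mu>0 f = density \<mu>0 g"
  proof (rule measure_eqI)
    show "sets (density \<mu>0 f) = sets (density \<mu>0 g)" by simp
  next
    fix A assume "A \<in> sets (density \<mu>0 f)"
    then have A0: "A \<in> sets \<mu>0" by simp
    then have A: "A \<in> sets GO" using s\<mu>0 by simp
    have AS0: "A \<inter> S \<in> sets \<mu>0" using sets.Int[OF A SO] s\<mu>0 by simp
    obtain B where B: "B \<in> sets GX" "A \<inter> S = B \<inter> S" using tr2[OF A] by blast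
    have "emeasure (density \<mu>0 f) A = (\<integral>\<^sup>+x. f x * indicator A x \<partial>\<mu>0)"
      by (rule emeasure_density[OF fm0 A0])
    also have "\<dots> = (\<integral>\<^sup>+x. LO x * indicator (A \<inter> S) x \<partial>\<mu>0)"
      by (rule nn_integral_cong) (simp add: f_def split: split_indicator)
    also have "\<dots> = emeasure (density \<mu>0 LO) (A \<inter> S)"
      by (rule emeasure_density[OF LOm0 AS0, symmetric])
    also have "\<dots> = emeasure P1 (A \<inter> S)"
      unfolding densO \<mu>1_def using emeasure_restr_to_subalg[OF subO1] sets.Int[OF A SO] by blast
    also have "\<dots> = emeasure P1 (S \<inter> B)" using B(2) by (simp add: Int_commute)
    also have "\<dots> = (\<integral>\<^sup>+x. LX x * indicator (S \<inter> B) x \<partial>P0)"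
      unfolding LX_def LR_def by (rule key[OF p0 p1 sP10 ac subX SP0 B(1) ni])
    also have "\<dots> = (\<integral>\<^sup>+x. g x * indicator A x \<partial>P0)"
    proof -
      have "S \<inter> B = A \<inter> S" using B(2) by blast
      then show ?thesis by (intro nn_integral_cong) (simp add: g_def split: split_indicator)
    qed
    also have "\<dots> = (\<integral>\<^sup>+x. g x * indicator A x \<partial>\<mu>0)"
      unfolding \<mu>0_def by (rule nn_integral_subalgebra2[OF subO, symmetric]) (use A in measurable)
    also have "\<dots> = emeasure (density \<mu>0 g) A"
      by (rule emeasure_density[OF gm0 A0, symmetric])
    finally show "emeasure (density \<mu>0 f) A = emeasure (density \<mu>0 g) A" .
  qed
  have "AE x in \<mu>0. f x = g x" by (rule m0.density_unique[OF fm0 gm0 dens_eq])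
  then have AEfg: "AE x in P0. f x = g x" using AE_restr_to_subalg[OF subO] unfolding \<mu>0_def by blast
  have AEsp: "AE x in P0. x \<in> \<Omega>" using AE_space[of P0] unfolding spP0 \<Omega>_def .
  have "AE \<omega> in P0. (\<forall>t\<ge>0. R t \<omega> = one_vec) \<longrightarrow> LO \<omega> = LX \<omega>"
    using AEfg AEsp
  proof eventually_elim
    case (elim \<omega>)
    show ?case
    proof
      assume "\<forall>t\<ge>0. R t \<omega> = one_vec"
      then have "\<omega> \<in> S" unfolding S_def using elim(2) by blast
      then show "LO \<omega> = LX \<omega>" using elim(1) unfolding f_def g_def by simp
    qed
  qed
  then show "AE \<omega> in P \<theta>0 \<psi>0. (\<forall>t\<ge>0. R t \<omega> = one_vec) \<longrightarrow>
           LR (proc_sigma (space M) (\<lambda>t \<omega>. (cmult (R t \<omega>) (X t \<omega>), R t \<omega>)))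
              (P \<theta> \<psi>0) (P \<theta>0 \<psi>0) \<omega>
           = LR (proc_sigma (space M) X) (P \<theta> \<psi>0) (P \<theta>0 \<psi>0) \<omega>"
    unfolding LO_def LX_def GO_def GX_def Y_def \<Omega>_def P0_def P1_def .
qed

end
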